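(* Let $Q_{\mathcal D}(w,x,y,z)=2(w^2+x^2+y^2+z^2)-(w+x+y+z)^2$ and $Q_{\mathcal L}(W,X,Y,Z)=-W^2+X^2+Y^2+Z^2$, and let $$\mathbf J_0=\frac12\begin{pmatrix}1&1&1&1\\1&1&-1&-1\\1&-1&1&-1\\1&-1&-1&1\end{pmatrix}.$$ For each $r\in\mathbb R$, the map $(W,X,Y,Z)^T=\mathbf J_0(w,x,y,z)^T$ is a bijection between real solutions of $Q_{\mathcal D}(w,x,y,z)=4r$ and real solutions of $Q_{\mathcal L}(W,X,Y,Z)=2r$, and it preserves the Euclidean height $H$. When $r=m\in\mathbb Z$, this map restricts to a bijection between integer solutions of $Q_{\mathcal D}(w,x,y,z)=4m$ and integer solutions of $Q_{\mathcal L}(W,X,Y,Z)=2m$. In particular, for all integers $m$ and all $T>0$, $N_{\mathcal D}(4m,T)=N_{\mathcal L}(2m,T)$.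
   Context: The Euclidean height of a real quadruple $\mathbf v=(w,x,y,z)$ is $H(\mathbf v)=(w^2+x^2+y^2+z^2)^{1/2}$. $N_{\mathcal D}(k,T)$ denotes the number of integer quadruples $\mathbf v$ with $Q_{\mathcal D}(\mathbf v)=k$ and $H(\mathbf v)\le T$; $N_{\mathcal L}(k,T)$ denotes the number of integer quadruples $\mathbf v$ with $Q_{\mathcal L}(\mathbf v)=k$ and $H(\mathbf v)\le T$. *)

theory Defs
  imports Complex_Main
begin

definition QD :: "'a::comm_ring_1 \<times> 'a \<times> 'a \<times> 'a \<Rightarrow> 'a" where
  "QD = (\<lambda>(w,x,y,z). 2 * (w^2 + x^2 + y^2 + z^2) - (w + x + y + z)^2)"

definition QL :: "'a::comm_ring_1 \<times> 'a \<times> 'a \<times> 'a \<Rightarrow> 'a" where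
  "QL = (\<lambda>(a,b,c,d). - (a^2) + b^2 + c^2 + d^2)"

definition J0 :: "real \<times> real \<times> real \<times> real \<Rightarrow> real \<times> real \<times> real \<times> real" where
  "J0 = (\<lambda>(w,x,y,z). ((w + x + y + z) / 2, (w + x - y - z) / 2,
                      (w - x + y - z) / 2, (w - x - y + z) / 2))"

definition H :: "real \<times> real \<times> real \<times> real \<Rightarrow> real" where
  "H = (\<lambda>(w,x,y,z). sqrt (w^2 + x^2 + y^2 + z^2))"

definition int_quads :: "(real \<times> real \<times> real \<times> real) set" where
  "int_quads = {(w,x,y,z). w \<in> \<int> \<and> x \<in> \<int> \<and> y \<in> \<int> \<and> z \<in> \<int>}"

definition real_quad :: "int \<times> int \<times> int \<times> int \<Rightarrow> real \<times> real \<times> real \<times> real" where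
  "real_quad = (\<lambda>(w,x,y,z). (of_int w, of_int x, of_int y, of_int z))"

definition N_D :: "int \<Rightarrow> real \<Rightarrow> nat" where
  "N_D k T = card {v :: int \<times> int \<times> int \<times> int. QD v = k \<and> H (real_quad v) \<le> T}"

definition N_L :: "int \<Rightarrow> real \<Rightarrow> nat" where
  "N_L k T = card {v :: int \<times> int \<times> int \<times> int. QL v = k \<and> H (real_quad v) \<le> T}"

end

theory Submission
  imports Defs
begin

lemma J0J0: "J0 (J0 v) = v"
  by (cases v) (auto simp: J0_def field_simps)

lemma QL_J0: "QL (J0 v) = QD v / 2"
  by (cases v) (auto simp: J0_def QL_def QD_def field_simps power2_eq_square)

lemma QD_J0: "QD (J0 v) = 2 * QL v"
  using QL_J0[of "J0 v"] by (simp add: J0J0)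

lemma H_J0: "H (J0 v) = H v"
  by (cases v) (auto simp: J0_def H_def field_simps power2_eq_square)

definition g :: "int \<times> int \<times> int \<times> int \<Rightarrow> int \<times> int \<times> int \<times> int" where
  "g = (\<lambda>(w,x,y,z). ((w + x + y + z) div 2, (w + x - y - z) div 2,
                      (w - x + y - z) div 2, (w - x - y + z) div 2))"

definition ssum :: "int \<times> int \<times> int \<times> int \<Rightarrow> int" where
  "ssum = (\<lambda>(w,x,y,z). w + x + y + z)"

lemma of_int_QD: "of_int (QD v) = QD (real_quad v)"
  by (cases v) (simp add: QD_def real_quad_def)

lemma of_int_QL: "of_int (QL v) = QL (real_quad v)"
  by (cases v) (simp add: QL_def real_quad_def)

lemma J0_rq: assumes "even (ssum v)" shows "J0 (real_quad v) = real_quad (g v)"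
proof -
  obtain w x y z where v: "v = (w,x,y,z)" by (cases v) auto
  have sv: "ssum v = w + x + y + z" by (simp add: v ssum_def)
  from assms obtain k where k: "w + x + y + z = 2*k" unfolding sv by (rule evenE)
  have e1: "w + x - y - z = 2*(k - y - z)" using k by simp
  have e2: "w - x + y - z = 2*(k - x - z)" using k by simp
  have e3: "w - x - y + z = 2*(k - x - y)" using k by simp
  have r0: "(real_of_int w + x + y + z) = 2 * k" using arg_cong[OF k, of real_of_int] by simp
  have r1: "(real_of_int w + x - y - z) = 2 * (k - y - z)" using arg_cong[OF e1, of real_of_int] by simp
  have r2: "(real_of_int w - x + y - z) = 2 * (k - x - z)" using arg_cong[OF e2, of real_of_int] by simp
  have r3: "(real_of_int w - x - y + z) = 2 * (k - x - y)" using arg_cong[OF e3, of real_of_int] by simp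
  have d0: "(w+x+y+z) div 2 = k" using k by simp
  have d1: "(w+x-y-z) div 2 = k-y-z" using e1 by simp
  have d2: "(w-x+y-z) div 2 = k-x-z" using e2 by simp
  have d3: "(w-x-y+z) div 2 = k-x-y" using e3 by simp
  show ?thesis
    unfolding v J0_def real_quad_def g_def using r0 r1 r2 r3 by (simp add: d0 d1 d2 d3)
qed

lemma even_QD: assumes "QD v = 4 * m" shows "even (ssum v)"
proof -
  obtain w x y z where v: "v = (w,x,y,z)" by (cases v) auto
  have "(w+x+y+z)^2 = 2 * (w^2+x^2+y^2+z^2 - 2*m)" using assms by (simp add: v QD_def algebra_simps)
  then have "even ((w+x+y+z)^2)" by simp
  then show ?thesis by (simp add: v ssum_def)
qed

lemma even_QL: assumes "QL v = 2 * m" shows "even (ssum v)"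
proof -
  obtain w x y z where v: "v = (w,x,y,z)" by (cases v) auto
  have "(w+x+y+z)^2 = 2 * (m + w^2 + w*x+w*y+w*z+x*y+x*z+y*z)" using assms
    by (simp add: v QL_def algebra_simps power2_eq_square)
  then have "even ((w+x+y+z)^2)" by simp
  then show ?thesis by (simp add: v ssum_def)
qed

lemma rq_inj: "real_quad u = real_quad v \<Longrightarrow> u = v"
  by (cases u; cases v) (simp add: real_quad_def)

lemma int_quads_iff: "v \<in> int_quads \<longleftrightarrow> (\<exists>u. v = real_quad u)"
proof
  assume "v \<in> int_quads"
  then obtain w x y z where "v = (of_int w, of_int x, of_int y, of_int z)"
    by (auto simp: int_quads_def elim!: Ints_cases)
  then show "\<exists>u. v = real_quad u" by (auto simp: real_quad_def)
next
  assume "\<exists>u. v = real_quad u"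
  then show "v \<in> int_quads" by (auto simp: int_quads_def real_quad_def)
qed

lemma gg: assumes "even (ssum v)" shows "g (g v) = v"
  using assms J0_rq[OF assms] J0J0[of "real_quad v"] J0_rq rq_inj
proof -
  have "even (ssum (g v))"
  proof -
    obtain w x y z where v: "v = (w,x,y,z)" by (cases v) auto
    have sv: "ssum v = w + x + y + z" by (simp add: v ssum_def)
  from assms obtain k where k: "w + x + y + z = 2*k" unfolding sv by (rule evenE)
    have "ssum (g v) = k + (k - y - z) + (k - x - z) + (k - x - y)"
    proof -
      have e1: "w + x - y - z = 2*(k - y - z)" using k by simp
      have e2: "w - x + y - z = 2*(k - x - z)" using k by simp
      have e3: "w - x - y + z = 2*(k - x - y)" using k by simp
      show ?thesis unfolding v g_def ssum_def by (simp add: k e1 e2 e3)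
    qed
    also have "\<dots> = 2 * (2*k - x - y - z)" by simp
    finally show ?thesis by simp
  qed
  then have "real_quad (g (g v)) = J0 (J0 (real_quad v))"
    using J0_rq[OF assms] J0_rq by simp
  then show ?thesis using J0J0 rq_inj by metis
qed

theorem lemma2p1:
  shows "(\<forall>r::real.
            bij_betw J0 {v. QD v = 4 * r} {v. QL v = 2 * r}
          \<and> (\<forall>v. QD v = 4 * r \<longrightarrow> H (J0 v) = H v))
       \<and> (\<forall>m::int.
            bij_betw J0 {v \<in> int_quads. QD v = 4 * of_int m}
                        {v \<in> int_quads. QL v = 2 * of_int m})
       \<and> (\<forall>(m::int) (T::real). T > 0 \<longrightarrow> N_D (4 * m) T = N_L (2 * m) T)"
proof (intro conjI allI impI)
  fix r :: real
  show "bij_betw J0 {v. QD v = 4 * r} {v. QL v = 2 * r}"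
    by (rule bij_betw_byWitness[where f'=J0]) (auto simp: J0J0 QL_J0 QD_J0)
  fix v :: "real \<times> real \<times> real \<times> real"
  show "H (J0 v) = H v" by (rule H_J0)
next
  fix m :: int
  show "bij_betw J0 {v \<in> int_quads. QD v = 4 * of_int m} {v \<in> int_quads. QL v = 2 * of_int m}"
  proof (rule bij_betw_byWitness[where f'=J0])
    show "J0 ` {v \<in> int_quads. QD v = 4 * of_int m} \<subseteq> {v \<in> int_quads. QL v = 2 * of_int m}"
    proof (rule image_subsetI, elim CollectE conjE, intro CollectI)
      fix v assume v: "v \<in> int_quads" "QD v = 4 * real_of_int m"
      then obtain u where u: "v = real_quad u" by (auto simp: int_quads_iff)
      have "QD u = 4 * m" using v(2) of_int_QD[of u] u
        by (metis of_int_eq_iff of_int_mult of_int_numeral)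
      then have "J0 v = real_quad (g u)" using u J0_rq even_QD by blast
      show "J0 v \<in> int_quads \<and> QL (J0 v) = 2 * real_of_int m"
      proof
        show "J0 v \<in> int_quads" using int_quads_iff[of "J0 v"] \<open>J0 v = real_quad (g u)\<close> by blast
        show "QL (J0 v) = 2 * real_of_int m" using v(2) QL_J0[of v] by simp
      qed
    qed
    show "J0 ` {v \<in> int_quads. QL v = 2 * of_int m} \<subseteq> {v \<in> int_quads. QD v = 4 * of_int m}"
    proof (rule image_subsetI, elim CollectE conjE, intro CollectI)
      fix v assume v: "v \<in> int_quads" "QL v = 2 * real_of_int m"
      then obtain u where u: "v = real_quad u" by (auto simp: int_quads_iff)
      have "QL u = 2 * m" using v(2) of_int_QL[of u] u
        by (metis of_int_eq_iff of_int_mult of_int_numeral)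
      then have "J0 v = real_quad (g u)" using u J0_rq even_QL by blast
      show "J0 v \<in> int_quads \<and> QD (J0 v) = 4 * real_of_int m"
      proof
        show "J0 v \<in> int_quads" using int_quads_iff[of "J0 v"] \<open>J0 v = real_quad (g u)\<close> by blast
        show "QD (J0 v) = 4 * real_of_int m" using v(2) QD_J0[of v] by simp
      qed
    qed
  qed (auto simp: J0J0)
next
  fix m :: int and T :: real
  let ?A = "{v :: int \<times> int \<times> int \<times> int. QD v = 4 * m \<and> H (real_quad v) \<le> T}"
  let ?B = "{v :: int \<times> int \<times> int \<times> int. QL v = 2 * m \<and> H (real_quad v) \<le> T}"
  have "bij_betw g ?A ?B"
  proof (rule bij_betw_byWitness[where f'=g])
    show "\<forall>a\<in>?A. g (g a) = a" using gg even_QD by blast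
    show "\<forall>a\<in>?B. g (g a) = a" using gg even_QL by blast
    show "g ` ?A \<subseteq> ?B"
    proof (rule image_subsetI, elim CollectE conjE, intro CollectI)
      fix u assume u: "QD u = 4 * m" "H (real_quad u) \<le> T"
      have rq: "real_quad (g u) = J0 (real_quad u)" using J0_rq even_QD u(1) by metis
      have "real_of_int (QL (g u)) = real_of_int (2*m)"
        using of_int_QL[of "g u"] rq QL_J0 of_int_QD[of u] u(1) by simp
      then have "QL (g u) = 2*m" by (metis of_int_eq_iff)
      then show "QL (g u) = 2 * m \<and> H (real_quad (g u)) \<le> T" using rq H_J0 u(2) by simp
    qed
    show "g ` ?B \<subseteq> ?A"
    proof (rule image_subsetI, elim CollectE conjE, intro CollectI)
      fix u assume u: "QL u = 2 * m" "H (real_quad u) \<le> T"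
      have rq: "real_quad (g u) = J0 (real_quad u)" using J0_rq even_QL u(1) by metis
      have "real_of_int (QD (g u)) = real_of_int (4*m)"
        using of_int_QD[of "g u"] rq QD_J0 of_int_QL[of u] u(1) by simp
      then have "QD (g u) = 4*m" by (metis of_int_eq_iff)
      then show "QD (g u) = 4 * m \<and> H (real_quad (g u)) \<le> T" using rq H_J0 u(2) by simp
    qed
  qed
  then show "N_D (4 * m) T = N_L (2 * m) T"
    unfolding N_D_def N_L_def by (rule bij_betw_same_card)
qed

end
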